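(* Let $(\mathcal V,[\cdot,\cdots,\cdot],S)$ be a generalized metric $n$-Leibniz algebra and $\mathfrak g=\mathrm{Im}\,D\subset\mathfrak{gl}(\mathcal V)$ with the commutator bracket $[\cdot,\cdot]_C$. There is a well-defined bilinear form $\omega$ on $\mathfrak g$ determined by $$\omega(D(u_1,\dots,u_{n-1}),D(v_1,\dots,v_{n-1}))=S(D(u_1,\dots,u_{n-1})v_1,v_2,\dots,v_{n-1}),$$ and $\omega$ is symmetric, non-degenerate and ad-invariant (i.e. $\omega([x,y]_C,z)=-\omega(y,[x,z]_C)$ for $x,y,z\in\mathfrak g$). Consequently $(\mathfrak g,[\cdot,\cdot]_C,\omega)$ is a metric Lie algebra.
   Context: All vector spaces are finite-dimensional over $\mathbb R$. An $n$-Leibniz algebra is a vector space $\mathcal V$ with an $n$-linear map $[\cdot,\cdots,\cdot]$ satisfying $[u_1,\dots,u_{n-1},[v_1,\dots,v_n]]=\sum_{i=1}^n[v_1,\dots,[u_1,\dots,u_{n-1},v_i],\dots,v_n]$. A symmetric $S\in\mathrm{Sym}^{n-1}(\mathcal V^* )$ is non-degenerate if $S(u,v_1,\dots,v_{n-2})=0$ for all $v_j$ implies $u=0$. A generalized metric $n$-Leibniz algebra is an $n$-Leibniz algebra with a symmetric non-degenerate $S\in\mathrm{Sym}^{n-1}(\mathcal V^* )$ satisfying (a) unitarity: $\sum_{i=1}^{n-1}S(v_1,\dots,[u_1,\dots,u_{n-1},v_i],\dots,v_{n-1})=0$ and (b) symmetry: $S([u_1,\dots,u_{n-1},v_1],v_2,\dots,v_{n-1})=S([v_1,\dots,v_{n-1},u_1],u_2,\dots,u_{n-1})$.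 $D(u_1,\dots,u_{n-1})\in\mathfrak{gl}(\mathcal V)$ is $u_n\mapsto[u_1,\dots,u_{n-1},u_n]$, extended linearly to $\otimes^{n-1}\mathcal V$; $\mathfrak g=\mathrm{Im}\,D$ is the span of all such operators, which is closed under the commutator $[A,B]_C=AB-BA$. A metric Lie algebra is a Lie algebra with a symmetric non-degenerate bilinear form $\omega$ with $\omega([x,y],z)=-\omega(y,[x,z])$. *)

theory Defs
  imports "HOL-Analysis.Analysis" "HOL-Combinatorics.Permutations"
begin

definition multilinear :: "nat \<Rightarrow> ('v::real_vector list \<Rightarrow> 'w::real_vector) \<Rightarrow> bool" where
  "multilinear m F \<longleftrightarrow> (\<forall>xs i a b x y. length xs = m \<and> i < m \<longrightarrow>
      F (xs[i := a *\<^sub>R x + b *\<^sub>R y]) = a *\<^sub>R F (xs[i := x]) + b *\<^sub>R F (xs[i := y]))"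

definition n_leibniz :: "nat \<Rightarrow> ('v::real_vector list \<Rightarrow> 'v) \<Rightarrow> bool" where
  "n_leibniz n br \<longleftrightarrow> multilinear n br \<and>
     (\<forall>us vs. length us = n - 1 \<and> length vs = n \<longrightarrow>
        br (us @ [br vs]) = (\<Sum>i<n. br (vs[i := br (us @ [vs ! i])])))"

definition symmetric_form :: "nat \<Rightarrow> ('v list \<Rightarrow> real) \<Rightarrow> bool" where
  "symmetric_form m S \<longleftrightarrow> (\<forall>xs p. length xs = m \<and> p permutes {..<m} \<longrightarrow>
      S (map (\<lambda>i. xs ! p i) [0..<m]) = S xs)"

definition nondegenerate_form :: "nat \<Rightarrow> ('v::zero list \<Rightarrow> real) \<Rightarrow> bool" where
  "nondegenerate_form m S \<longleftrightarrow> (\<forall>u. (\<forall>vs. length vs = m - 1 \<longrightarrow> S (u # vs) = 0) \<longrightarrow> u = 0)"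

definition gen_metric_n_leibniz :: "nat \<Rightarrow> ('v::real_vector list \<Rightarrow> 'v) \<Rightarrow> ('v list \<Rightarrow> real) \<Rightarrow> bool" where
  "gen_metric_n_leibniz n br S \<longleftrightarrow>
     n_leibniz n br \<and> multilinear (n - 1) S \<and> symmetric_form (n - 1) S \<and>
     nondegenerate_form (n - 1) S \<and>
     (\<forall>us vs. length us = n - 1 \<and> length vs = n - 1 \<longrightarrow>
        (\<Sum>i<n - 1. S (vs[i := br (us @ [vs ! i])])) = 0) \<and>
     (\<forall>us vs. length us = n - 1 \<and> length vs = n - 1 \<longrightarrow>
        S (br (us @ [hd vs]) # tl vs) = S (br (vs @ [hd us]) # tl us))"

definition Dop :: "('v list \<Rightarrow> 'v) \<Rightarrow> 'v list \<Rightarrow> 'v \<Rightarrow> 'v" where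
  "Dop br us = (\<lambda>w. br (us @ [w]))"

text \<open>g = Im D: the linear span of all operators D(u_1,...,u_{n-1}).\<close>
definition LieD :: "nat \<Rightarrow> ('v::real_vector list \<Rightarrow> 'v) \<Rightarrow> ('v \<Rightarrow> 'v) set" where
  "LieD n br = {f. \<exists>K c us. finite (K::nat set) \<and> (\<forall>k\<in>K. length (us k) = n - 1) \<and>
      f = (\<lambda>w. \<Sum>k\<in>K. c k *\<^sub>R Dop br (us k) w)}"

definition comm :: "('v::real_vector \<Rightarrow> 'v) \<Rightarrow> ('v \<Rightarrow> 'v) \<Rightarrow> 'v \<Rightarrow> 'v" where
  "comm x y = (\<lambda>w. x (y w) - y (x w))"

definition lincomb :: "real \<Rightarrow> ('v::real_vector \<Rightarrow> 'v) \<Rightarrow> real \<Rightarrow> ('v \<Rightarrow> 'v) \<Rightarrow> 'v \<Rightarrow> 'v" where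
  "lincomb a x b y = (\<lambda>w. a *\<^sub>R x w + b *\<^sub>R y w)"

definition bilinear_on :: "('v::real_vector \<Rightarrow> 'v) set \<Rightarrow> (('v \<Rightarrow> 'v) \<Rightarrow> ('v \<Rightarrow> 'v) \<Rightarrow> real) \<Rightarrow> bool" where
  "bilinear_on G \<omega> \<longleftrightarrow> (\<forall>x\<in>G. \<forall>y\<in>G. \<forall>z\<in>G. \<forall>a b.
      \<omega> (lincomb a x b y) z = a * \<omega> x z + b * \<omega> y z \<and>
      \<omega> z (lincomb a x b y) = a * \<omega> z x + b * \<omega> z y)"

definition metric_lie_algebra_on :: "('v::real_vector \<Rightarrow> 'v) set \<Rightarrow> (('v \<Rightarrow> 'v) \<Rightarrow> ('v \<Rightarrow> 'v) \<Rightarrow> real) \<Rightarrow> bool" where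
  "metric_lie_algebra_on G \<omega> \<longleftrightarrow>
     (\<lambda>w. 0) \<in> G \<and> (\<forall>x\<in>G. \<forall>y\<in>G. \<forall>a b. lincomb a x b y \<in> G) \<and>
     (\<forall>x\<in>G. \<forall>y\<in>G. comm x y \<in> G) \<and>
     (\<forall>x\<in>G. \<forall>y\<in>G. comm x y = lincomb (-1) (comm y x) 0 (\<lambda>w. 0)) \<and>
     (\<forall>x\<in>G. \<forall>y\<in>G. \<forall>z\<in>G. (\<lambda>w. comm x (comm y z) w + comm y (comm z x) w + comm z (comm x y) w) = (\<lambda>w. 0)) \<and>
     bilinear_on G \<omega> \<and>
     (\<forall>x\<in>G. \<forall>y\<in>G. \<omega> x y = \<omega> y x) \<and>
     (\<forall>x\<in>G. (\<forall>y\<in>G. \<omega> x y = 0) \<longrightarrow> x = (\<lambda>w. 0)) \<and>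
     (\<forall>x\<in>G. \<forall>y\<in>G. \<forall>z\<in>G. \<omega> (comm x y) z = - \<omega> y (comm x z))"

end

theory Submission
  imports Defs
begin

lemma ml_lin:
  assumes "multilinear m F" "length xs = m" "i < m"
  shows "F (xs[i := a *\<^sub>R x + b *\<^sub>R y]) = a *\<^sub>R F (xs[i := x]) + b *\<^sub>R F (xs[i := y])"
  using assms unfolding multilinear_def by blast

lemma ml_zero:
  assumes "multilinear m F" "length xs = m" "i < m"
  shows "F (xs[i := 0]) = 0"
  using ml_lin[OF assms, of 0 0 0 0] by simp

lemma ml_sum:
  assumes "multilinear m F" "length xs = m" "i < m" "finite J"
  shows "F (xs[i := (\<Sum>j\<in>J. d j *\<^sub>R a j)]) = (\<Sum>j\<in>J. d j *\<^sub>R F (xs[i := a j]))"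
  using assms(4)
proof (induction J rule: finite_induct)
  case empty
  then show ?case using ml_zero[OF assms(1-3)] by simp
next
  case (insert j J)
  have "F (xs[i := (\<Sum>j\<in>insert j J. d j *\<^sub>R a j)]) =
        F (xs[i := d j *\<^sub>R a j + 1 *\<^sub>R (\<Sum>j\<in>J. d j *\<^sub>R a j)])"
    using insert by simp
  also have "\<dots> = d j *\<^sub>R F (xs[i := a j]) + 1 *\<^sub>R F (xs[i := (\<Sum>j\<in>J. d j *\<^sub>R a j)])"
    by (rule ml_lin[OF assms(1-3)])
  finally show ?case using insert by simp
qed

definition isrep :: "nat \<Rightarrow> ('v::real_vector list \<Rightarrow> 'v) \<Rightarrow> ('v \<Rightarrow> 'v) \<Rightarrow> nat set \<Rightarrow> (nat \<Rightarrow> real) \<Rightarrow> (nat \<Rightarrow> 'v list) \<Rightarrow> bool" where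
  "isrep n br f K c us \<longleftrightarrow> finite K \<and> (\<forall>k\<in>K. length (us k) = n - 1) \<and>
      f = (\<lambda>w. \<Sum>k\<in>K. c k *\<^sub>R Dop br (us k) w)"

lemma LieD_iff: "f \<in> LieD n br \<longleftrightarrow> (\<exists>K c us. isrep n br f K c us)"
  unfolding LieD_def isrep_def by blast

definition FF :: "('v list \<Rightarrow> real) \<Rightarrow> ('v \<Rightarrow> 'v) \<Rightarrow> nat set \<Rightarrow> (nat \<Rightarrow> real) \<Rightarrow> (nat \<Rightarrow> 'v list) \<Rightarrow> real" where
  "FF S x K c us = (\<Sum>k\<in>K. c k * S (x (hd (us k)) # tl (us k)))"

definition repof :: "nat \<Rightarrow> ('v::real_vector list \<Rightarrow> 'v) \<Rightarrow> ('v \<Rightarrow> 'v) \<Rightarrow> nat set \<times> (nat \<Rightarrow> real) \<times> (nat \<Rightarrow> 'v list)" where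
  "repof n br y = (SOME r. isrep n br y (fst r) (fst (snd r)) (snd (snd r)))"

definition omega :: "nat \<Rightarrow> ('v::real_vector list \<Rightarrow> 'v) \<Rightarrow> ('v list \<Rightarrow> real) \<Rightarrow> ('v \<Rightarrow> 'v) \<Rightarrow> ('v \<Rightarrow> 'v) \<Rightarrow> real" where
  "omega n br S x y = FF S x (fst (repof n br y)) (fst (snd (repof n br y))) (snd (snd (repof n br y)))"

lemma repof_isrep:
  assumes "y \<in> LieD n br"
  shows "isrep n br y (fst (repof n br y)) (fst (snd (repof n br y))) (snd (snd (repof n br y)))"
proof -
  from assms obtain K c us where "isrep n br y K c us" by (auto simp: LieD_iff)
  then have "\<exists>r. isrep n br y (fst r) (fst (snd r)) (snd (snd r))" by (intro exI[of _ "(K,c,us)"]) simp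
  then show ?thesis unfolding repof_def by (rule someI_ex)
qed

locale gm =
  fixes n :: nat and br :: "'v::real_vector list \<Rightarrow> 'v" and S :: "'v list \<Rightarrow> real"
  assumes n2: "n \<ge> 2" and gm: "gen_metric_n_leibniz n br S"
begin

abbreviation "G \<equiv> LieD n br"

lemma mlbr: "multilinear n br" and leib: "\<And>us vs. length us = n - 1 \<Longrightarrow> length vs = n \<Longrightarrow>
        br (us @ [br vs]) = (\<Sum>i<n. br (vs[i := br (us @ [vs ! i])]))"
  and mlS: "multilinear (n - 1) S" and symS: "symmetric_form (n - 1) S"
  and ndS: "nondegenerate_form (n - 1) S"
  and unit: "\<And>us vs. length us = n - 1 \<Longrightarrow> length vs = n - 1 \<Longrightarrow>
        (\<Sum>i<n - 1. S (vs[i := br (us @ [vs ! i])])) = 0"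
  and symb: "\<And>us vs. length us = n - 1 \<Longrightarrow> length vs = n - 1 \<Longrightarrow>
        S (br (us @ [hd vs]) # tl vs) = S (br (vs @ [hd us]) # tl us)"
  using gm unfolding gen_metric_n_leibniz_def n_leibniz_def by blast+

lemma D_lin: "length us = n - 1 \<Longrightarrow> linear (Dop br us)"
proof -
  assume l: "length us = n - 1"
  have e: "\<And>v. Dop br us v = br ((us @ [0])[n - 1 := v])"
    using l n2 by (simp add: Dop_def list_update_append)
  have l2: "length (us @ [0]) = n" "n - 1 < n" using l n2 by auto
  show ?thesis
  proof (rule linearI)
    fix a b show "Dop br us (a + b) = Dop br us a + Dop br us b"
      using ml_lin[OF mlbr l2, of 1 a 1 b] by (simp add: e)
  next
    fix r b show "Dop br us (r *\<^sub>R b) = r *\<^sub>R Dop br us b"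
      using ml_lin[OF mlbr l2, of r b 0 0] by (simp add: e)
  qed
qed

lemma isrep_G: "isrep n br f K c us \<Longrightarrow> f \<in> G" by (auto simp: LieD_iff)

lemma G_linear: assumes "x \<in> G" shows "linear x"
proof -
  from assms obtain K c us where r: "isrep n br x K c us" by (auto simp: LieD_iff)
  then show ?thesis unfolding isrep_def
    by (auto intro!: linear_compose_sum linear_compose_scale_right D_lin)
qed

lemma G_zero: "(\<lambda>w. 0) \<in> G"
  by (rule isrep_G[of _ "{}" "\<lambda>_. 0" "\<lambda>_. []"]) (simp add: isrep_def)

lemma G_D: "length us = n - 1 \<Longrightarrow> Dop br us \<in> G"
  by (rule isrep_G[of _ "{0}" "\<lambda>_. 1" "\<lambda>_. us"]) (simp add: isrep_def)

lemma isrep_D: "length us = n - 1 \<Longrightarrow> isrep n br (Dop br us) {0} (\<lambda>_. 1) (\<lambda>_. us)"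
  by (simp add: isrep_def)

lemma G_lincomb:
  assumes "x \<in> G" "y \<in> G" shows "lincomb a x b y \<in> G"
proof -
  from assms obtain J d ux K c uy where rx: "isrep n br x J d ux" and ry: "isrep n br y K c uy"
    by (auto simp: LieD_iff)
  define I where "I = (\<lambda>j. 2*j) ` J \<union> (\<lambda>k. Suc (2*k)) ` K"
  define e where "e i = (if even i then a * d (i div 2) else b * c (i div 2))" for i
  define u where "u i = (if even i then ux (i div 2) else uy (i div 2))" for i
  have fin: "finite I" using rx ry by (simp add: I_def isrep_def)
  have len: "\<forall>i\<in>I. length (u i) = n - 1" using rx ry by (auto simp: I_def u_def isrep_def)
  have disj: "(\<lambda>j. 2*j) ` J \<inter> (\<lambda>k. Suc (2*k)) ` K = {}" by auto presburger
  have inj1: "inj_on (\<lambda>j::nat. 2*j) J" by (auto simp: inj_on_def)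
  have inj2: "inj_on (\<lambda>k::nat. Suc (2*k)) K" by (auto simp: inj_on_def)
  have "lincomb a x b y = (\<lambda>w. \<Sum>i\<in>I. e i *\<^sub>R Dop br (u i) w)"
  proof
    fix w
    have "(\<Sum>i\<in>I. e i *\<^sub>R Dop br (u i) w) =
      (\<Sum>i\<in>(\<lambda>j. 2*j) ` J. e i *\<^sub>R Dop br (u i) w) + (\<Sum>i\<in>(\<lambda>k. Suc (2*k)) ` K. e i *\<^sub>R Dop br (u i) w)"
      unfolding I_def using rx ry disj by (intro sum.union_disjoint) (auto simp: isrep_def)
    also have "\<dots> = (\<Sum>j\<in>J. (a * d j) *\<^sub>R Dop br (ux j) w) + (\<Sum>k\<in>K. (b * c k) *\<^sub>R Dop br (uy k) w)"
      by (simp add: sum.reindex[OF inj1] sum.reindex[OF inj2] e_def u_def)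
    also have "\<dots> = lincomb a x b y w"
      using rx ry by (simp add: isrep_def lincomb_def scaleR_sum_right)
    finally show "lincomb a x b y w = (\<Sum>i\<in>I. e i *\<^sub>R Dop br (u i) w)" by simp
  qed
  then show ?thesis using fin len by (intro isrep_G[of _ I e u]) (simp add: isrep_def)
qed

lemma G_sum:
  assumes "finite K" "\<forall>k\<in>K. g k \<in> G" shows "(\<lambda>w. \<Sum>k\<in>K. c k *\<^sub>R g k w) \<in> G"
  using assms
proof (induction K rule: finite_induct)
  case empty then show ?case using G_zero by simp
next
  case (insert k K)
  have "(\<lambda>w. \<Sum>k\<in>insert k K. c k *\<^sub>R g k w) = lincomb (c k) (g k) 1 (\<lambda>w. \<Sum>k\<in>K. c k *\<^sub>R g k w)"
    using insert by (simp add: lincomb_def)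
  then show ?case using insert G_lincomb by simp
qed

lemma S_lin0: "length r = n - 2 \<Longrightarrow> S ((a *\<^sub>R x + b *\<^sub>R y) # r) = a * S (x # r) + b * S (y # r)"
  using ml_lin[OF mlS, of "0 # r" 0 a x b y] n2 by simp

lemma S_sum0: "length r = n - 2 \<Longrightarrow> finite J \<Longrightarrow>
   S ((\<Sum>j\<in>J. d j *\<^sub>R a j) # r) = (\<Sum>j\<in>J. d j * S (a j # r))"
  using ml_sum[OF mlS, of "0 # r" 0 J d a] n2 by simp

lemma keyL:
  assumes rx: "isrep n br x J d ux" and ry: "isrep n br y K c uy"
  shows "FF S x K c uy = FF S y J d ux"
proof -
  have fJ: "finite J" and fK: "finite K" using rx ry by (auto simp: isrep_def)
  have lx: "\<And>j. j \<in> J \<Longrightarrow> length (ux j) = n - 1" and ly: "\<And>k. k \<in> K \<Longrightarrow> length (uy k) = n - 1"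
    using rx ry by (auto simp: isrep_def)
  have "FF S x K c uy = (\<Sum>k\<in>K. c k * (\<Sum>j\<in>J. d j * S (Dop br (ux j) (hd (uy k)) # tl (uy k))))"
    unfolding FF_def
  proof (rule sum.cong[OF refl])
    fix k assume k: "k \<in> K"
    have "x (hd (uy k)) = (\<Sum>j\<in>J. d j *\<^sub>R Dop br (ux j) (hd (uy k)))" using rx by (simp add: isrep_def)
    then show "c k * S (x (hd (uy k)) # tl (uy k)) = c k * (\<Sum>j\<in>J. d j * S (Dop br (ux j) (hd (uy k)) # tl (uy k)))"
      using S_sum0[OF _ fJ, of "tl (uy k)"] ly[OF k] by simp
  qed
  also have "\<dots> = (\<Sum>k\<in>K. \<Sum>j\<in>J. c k * d j * S (Dop br (uy k) (hd (ux j)) # tl (ux j)))"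
    by (intro sum.cong refl) (simp add: sum_distrib_left Dop_def symb lx ly mult.assoc)
  also have "\<dots> = (\<Sum>j\<in>J. \<Sum>k\<in>K. c k * d j * S (Dop br (uy k) (hd (ux j)) # tl (ux j)))"
    by (rule sum.swap)
  also have "\<dots> = FF S y J d ux"
    unfolding FF_def
  proof (rule sum.cong[OF refl])
    fix j assume j: "j \<in> J"
    have "y (hd (ux j)) = (\<Sum>k\<in>K. c k *\<^sub>R Dop br (uy k) (hd (ux j)))" using ry by (simp add: isrep_def)
    then show "(\<Sum>k\<in>K. c k * d j * S (Dop br (uy k) (hd (ux j)) # tl (ux j))) = d j * S (y (hd (ux j)) # tl (ux j))"
      using S_sum0[OF _ fK, of "tl (ux j)"] lx[OF j] by (simp add: sum_distrib_left mult_ac)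
  qed
  finally show ?thesis .
qed

lemma omega_rep: assumes "x \<in> G" "isrep n br y K c uy" shows "omega n br S x y = FF S x K c uy"
proof -
  from assms(1) obtain J d ux where rx: "isrep n br x J d ux" by (auto simp: LieD_iff)
  have "omega n br S x y = FF S y J d ux"
    unfolding omega_def by (rule keyL[OF rx repof_isrep[OF isrep_G[OF assms(2)]]])
  also have "\<dots> = FF S x K c uy" by (rule keyL[OF rx assms(2), symmetric])
  finally show ?thesis .
qed

lemma omega_alt: assumes "isrep n br z J d uz" "w \<in> G" shows "omega n br S z w = FF S w J d uz"
  unfolding omega_def by (rule keyL[OF assms(1) repof_isrep[OF assms(2)]])

lemma omega_D: "x \<in> G \<Longrightarrow> length vs = n - 1 \<Longrightarrow> omega n br S x (Dop br vs) = S (x (hd vs) # tl vs)"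
  by (simp add: omega_rep[OF _ isrep_D] FF_def)

lemma FF_lincomb: "(\<forall>k\<in>K. length (u k) = n - 1) \<Longrightarrow>
   FF S (lincomb a x b y) K c u = a * FF S x K c u + b * FF S y K c u"
  unfolding FF_def lincomb_def
  by (simp add: S_lin0 sum_distrib_left sum.distrib algebra_simps)

lemma omega_bilinear: "bilinear_on G (omega n br S)"
  unfolding bilinear_on_def
proof (intro ballI allI conjI)
  fix x y z a b assume x: "x \<in> G" and y: "y \<in> G" and z: "z \<in> G"
  have rz: "isrep n br z (fst (repof n br z)) (fst (snd (repof n br z))) (snd (snd (repof n br z)))"
    by (rule repof_isrep[OF z])
  have lz: "\<forall>k\<in>fst (repof n br z). length (snd (snd (repof n br z)) k) = n - 1" using rz by (simp add: isrep_def)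
  show "omega n br S (lincomb a x b y) z = a * omega n br S x z + b * omega n br S y z"
    unfolding omega_def by (rule FF_lincomb[OF lz])
  show "omega n br S z (lincomb a x b y) = a * omega n br S z x + b * omega n br S z y"
    using omega_alt[OF rz] G_lincomb[OF x y] x y FF_lincomb[OF lz] by simp
qed

lemma omega_sym: "x \<in> G \<Longrightarrow> y \<in> G \<Longrightarrow> omega n br S x y = omega n br S y x"
  using omega_alt[OF repof_isrep[of y]] unfolding omega_def[of n br S x y] by simp

lemma omega_nondeg: assumes x: "x \<in> G" and h: "\<forall>y\<in>G. omega n br S x y = 0" shows "x = (\<lambda>w. 0)"
proof
  fix w
  have "\<forall>vs. length vs = n - 1 - 1 \<longrightarrow> S (x w # vs) = 0"
  proof (intro allI impI)
    fix vs :: "'v list" assume l: "length vs = n - 1 - 1"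
    have l2: "length (w # vs) = n - 1" using l n2 by simp
    show "S (x w # vs) = 0" using h G_D[OF l2] omega_D[OF x l2] by simp
  qed
  then show "x w = 0" using ndS unfolding nondegenerate_form_def by blast
qed

lemma bil1: "bilinear_on G \<omega> \<Longrightarrow> x \<in> G \<Longrightarrow> y \<in> G \<Longrightarrow> z \<in> G \<Longrightarrow>
   \<omega> (lincomb a x b y) z = a * \<omega> x z + b * \<omega> y z"
  unfolding bilinear_on_def by blast

lemma bil2: "bilinear_on G \<omega> \<Longrightarrow> x \<in> G \<Longrightarrow> y \<in> G \<Longrightarrow> z \<in> G \<Longrightarrow>
   \<omega> z (lincomb a x b y) = a * \<omega> z x + b * \<omega> z y"
  unfolding bilinear_on_def by blast

lemma B1:
  assumes bl: "bilinear_on G \<omega>" and fJ: "finite J" and g: "\<forall>j\<in>J. g j \<in> G" and z: "z \<in> G"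
  shows "\<omega> (\<lambda>w. \<Sum>j\<in>J. d j *\<^sub>R g j w) z = (\<Sum>j\<in>J. d j * \<omega> (g j) z)"
  using fJ g
proof (induction J rule: finite_induct)
  case empty
  have "(\<lambda>w. 0) = lincomb 0 z 0 z" by (simp add: lincomb_def)
  then have "\<omega> (\<lambda>w. 0) z = 0 * \<omega> z z + 0 * \<omega> z z" using bil1[OF bl z z z, of 0 0] by simp
  then show ?case by simp
next
  case (insert j J)
  have e: "(\<lambda>w. \<Sum>k\<in>insert j J. d k *\<^sub>R g k w) = lincomb (d j) (g j) 1 (\<lambda>w. \<Sum>k\<in>J. d k *\<^sub>R g k w)"
    using insert(1,2) by (simp add: lincomb_def)
  have F: "(\<lambda>w. \<Sum>k\<in>J. d k *\<^sub>R g k w) \<in> G" using insert(1,4) by (intro G_sum) auto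
  have gj: "g j \<in> G" using insert(4) by simp
  show ?case unfolding e bil1[OF bl gj F z] using insert by simp
qed

lemma B2:
  assumes bl: "bilinear_on G \<omega>" and fJ: "finite J" and g: "\<forall>j\<in>J. g j \<in> G" and z: "z \<in> G"
  shows "\<omega> z (\<lambda>w. \<Sum>j\<in>J. d j *\<^sub>R g j w) = (\<Sum>j\<in>J. d j * \<omega> z (g j))"
  using fJ g
proof (induction J rule: finite_induct)
  case empty
  have "(\<lambda>w. 0) = lincomb 0 z 0 z" by (simp add: lincomb_def)
  then have "\<omega> z (\<lambda>w. 0) = 0 * \<omega> z z + 0 * \<omega> z z" using bil2[OF bl z z z, of 0 0] by simp
  then show ?case by simp
next
  case (insert j J)
  have e: "(\<lambda>w. \<Sum>k\<in>insert j J. d k *\<^sub>R g k w) = lincomb (d j) (g j) 1 (\<lambda>w. \<Sum>k\<in>J. d k *\<^sub>R g k w)"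
    using insert(1,2) by (simp add: lincomb_def)
  have F: "(\<lambda>w. \<Sum>k\<in>J. d k *\<^sub>R g k w) \<in> G" using insert(1,4) by (intro G_sum) auto
  have gj: "g j \<in> G" using insert(4) by simp
  show ?case unfolding e bil2[OF bl gj F z] using insert by simp
qed

lemma bil_expand:
  assumes bl: "bilinear_on G \<omega>" and rx: "isrep n br x J d ux" and ry: "isrep n br y K c uy"
  shows "\<omega> x y = (\<Sum>j\<in>J. d j * (\<Sum>k\<in>K. c k * \<omega> (Dop br (ux j)) (Dop br (uy k))))"
proof -
  have fJ: "finite J" and fK: "finite K" and gx: "\<forall>j\<in>J. Dop br (ux j) \<in> G" and gy: "\<forall>k\<in>K. Dop br (uy k) \<in> G"
    using rx ry by (auto simp: isrep_def intro: G_D)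
  have y: "y \<in> G" using ry by (rule isrep_G)
  have "\<omega> x y = (\<Sum>j\<in>J. d j * \<omega> (Dop br (ux j)) y)"
    using B1[OF bl fJ gx y] rx by (simp add: isrep_def)
  also have "\<dots> = (\<Sum>j\<in>J. d j * (\<Sum>k\<in>K. c k * \<omega> (Dop br (ux j)) (Dop br (uy k))))"
  proof (intro sum.cong refl)
    fix j assume "j \<in> J"
    then show "d j * \<omega> (Dop br (ux j)) y = d j * (\<Sum>k\<in>K. c k * \<omega> (Dop br (ux j)) (Dop br (uy k)))"
      using B2[OF bl fK gy, of "Dop br (ux j)" c] gx ry by (simp add: isrep_def)
  qed
  finally show ?thesis .
qed

lemma CD0:
  assumes lu: "length us = n - 1" and lw: "length ws = n - 1"
  shows "Dop br us (Dop br ws v) = (\<Sum>i<n - 1. Dop br (ws[i := Dop br us (ws!i)]) v) + Dop br ws (Dop br us v)"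
proof -
  have n: "n = Suc (n - 1)" using n2 by simp
  have "Dop br us (Dop br ws v) = (\<Sum>i<n. br ((ws @ [v])[i := br (us @ [(ws @ [v]) ! i])]))"
    unfolding Dop_def by (rule leib) (use lu lw n2 in auto)
  also have "\<dots> = (\<Sum>i<n - 1. br ((ws @ [v])[i := br (us @ [(ws @ [v]) ! i])])) +
       br ((ws @ [v])[n - 1 := br (us @ [(ws @ [v]) ! (n - 1)])])"
    by (subst n) (simp only: sum.lessThan_Suc diff_Suc_1)
  also have "(\<Sum>i<n - 1. br ((ws @ [v])[i := br (us @ [(ws @ [v]) ! i])])) =
        (\<Sum>i<n - 1. Dop br (ws[i := Dop br us (ws!i)]) v)"
    by (intro sum.cong refl) (simp add: Dop_def list_update_append nth_append lw)
  also have "br ((ws @ [v])[n - 1 := br (us @ [(ws @ [v]) ! (n - 1)])]) = Dop br ws (Dop br us v)"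
    by (simp add: Dop_def list_update_append nth_append lw)
  finally show ?thesis .
qed

lemma CD:
  assumes x: "x \<in> G" and lw: "length ws = n - 1"
  shows "comm x (Dop br ws) = (\<lambda>v. \<Sum>i<n - 1. Dop br (ws[i := x (ws!i)]) v)"
proof
  fix v
  from x obtain J d ux where rx: "isrep n br x J d ux" by (auto simp: LieD_iff)
  have fJ: "finite J" and lx: "\<And>j. j \<in> J \<Longrightarrow> length (ux j) = n - 1"
    and xe: "\<And>w. x w = (\<Sum>j\<in>J. d j *\<^sub>R Dop br (ux j) w)" using rx by (auto simp: isrep_def)
  have linw: "linear (Dop br ws)" by (rule D_lin[OF lw])
  have "comm x (Dop br ws) v = (\<Sum>j\<in>J. d j *\<^sub>R Dop br (ux j) (Dop br ws v)) -
      Dop br ws (\<Sum>j\<in>J. d j *\<^sub>R Dop br (ux j) v)"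
    by (simp add: comm_def xe)
  also have "\<dots> = (\<Sum>j\<in>J. d j *\<^sub>R (Dop br (ux j) (Dop br ws v) - Dop br ws (Dop br (ux j) v)))"
    by (simp add: linear_sum[OF linw] linear_scale[OF linw] scaleR_diff_right sum_subtractf)
  also have "\<dots> = (\<Sum>j\<in>J. d j *\<^sub>R (\<Sum>i<n - 1. Dop br (ws[i := Dop br (ux j) (ws!i)]) v))"
    by (intro sum.cong refl) (simp add: CD0[OF lx lw])
  also have "\<dots> = (\<Sum>i<n - 1. \<Sum>j\<in>J. d j *\<^sub>R Dop br (ws[i := Dop br (ux j) (ws!i)]) v)"
    by (simp add: scaleR_sum_right sum.swap[of _ J])
  also have "\<dots> = (\<Sum>i<n - 1. Dop br (ws[i := x (ws!i)]) v)"
  proof (intro sum.cong refl)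
    fix i assume i: "i \<in> {..<n - 1}"
    have l2: "length (ws @ [v]) = n" "i < n" using lw i n2 by auto
    have e: "\<And>a. Dop br (ws[i := a]) v = br ((ws @ [v])[i := a])"
      using i lw by (simp add: Dop_def list_update_append)
    show "(\<Sum>j\<in>J. d j *\<^sub>R Dop br (ws[i := Dop br (ux j) (ws!i)]) v) = Dop br (ws[i := x (ws!i)]) v"
      unfolding e xe by (rule ml_sum[OF mlbr l2 fJ, symmetric])
  qed
  finally show "comm x (Dop br ws) v = (\<Sum>i<n - 1. Dop br (ws[i := x (ws!i)]) v)" .
qed

lemma G_commD: "x \<in> G \<Longrightarrow> length ws = n - 1 \<Longrightarrow> comm x (Dop br ws) \<in> G"
  using G_sum[of "{..<n - 1}" "\<lambda>i. Dop br (ws[i := x (ws!i)])" "\<lambda>_. 1"]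
  by (simp add: CD G_D)

lemma CE:
  assumes x: "x \<in> G" and ry: "isrep n br y K c uy"
  shows "comm x y = (\<lambda>w. \<Sum>k\<in>K. c k *\<^sub>R comm x (Dop br (uy k)) w)"
proof
  fix w
  have lx: "linear x" by (rule G_linear[OF x])
  have ye: "\<And>w. y w = (\<Sum>k\<in>K. c k *\<^sub>R Dop br (uy k) w)" using ry by (simp add: isrep_def)
  show "comm x y w = (\<Sum>k\<in>K. c k *\<^sub>R comm x (Dop br (uy k)) w)"
    by (simp add: comm_def ye linear_sum[OF lx] linear_scale[OF lx] scaleR_diff_right sum_subtractf)
qed

lemma G_comm: assumes "x \<in> G" "y \<in> G" shows "comm x y \<in> G"
proof -
  from assms(2) obtain K c uy where ry: "isrep n br y K c uy" by (auto simp: LieD_iff)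
  then show ?thesis unfolding CE[OF assms(1) ry]
    by (intro G_sum) (auto simp: isrep_def intro: G_commD[OF assms(1)])
qed

lemma UG:
  assumes x: "x \<in> G" and lv: "length vs = n - 1"
  shows "(\<Sum>i<n - 1. S (vs[i := x (vs!i)])) = 0"
proof -
  from x obtain J d ux where rx: "isrep n br x J d ux" by (auto simp: LieD_iff)
  have fJ: "finite J" and lx: "\<And>j. j \<in> J \<Longrightarrow> length (ux j) = n - 1"
    and xe: "\<And>w. x w = (\<Sum>j\<in>J. d j *\<^sub>R Dop br (ux j) w)" using rx by (auto simp: isrep_def)
  have "(\<Sum>i<n - 1. S (vs[i := x (vs!i)])) = (\<Sum>i<n - 1. \<Sum>j\<in>J. d j * S (vs[i := br (ux j @ [vs ! i])]))"
    unfolding xe by (intro sum.cong refl) (simp add: ml_sum[OF mlS lv _ fJ] Dop_def)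
  also have "\<dots> = (\<Sum>j\<in>J. d j * (\<Sum>i<n - 1. S (vs[i := br (ux j @ [vs ! i])])))"
    by (simp add: sum_distrib_left sum.swap[of _ J])
  also have "\<dots> = 0" by (rule sum.neutral) (use unit[OF lx lv] in simp)
  finally show ?thesis .
qed

lemma PK:
  assumes x: "x \<in> G" and y: "y \<in> G" and lw: "length ws = n - 1"
  shows "(\<Sum>i<n - 1. S (y (hd (ws[i := x (ws!i)])) # tl (ws[i := x (ws!i)]))) = - S (comm x y (hd ws) # tl ws)"
proof -
  obtain m where m: "n - 1 = Suc m" using n2 by (intro that[of "n - 2"]) simp
  obtain w1 t where ws: "ws = w1 # t" using lw m by (cases ws) auto
  have lt: "length t = m" "length t = n - 2" using lw ws m by auto
  have u: "(\<Sum>i<n - 1. S ((y w1 # t)[i := x ((y w1 # t)!i)])) = 0"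
    by (rule UG[OF x]) (use lw ws in simp)
  then have u2: "S (x (y w1) # t) + (\<Sum>i<m. S (y w1 # t[i := x (t!i)])) = 0"
    unfolding m by (simp only: sum.lessThan_Suc_shift) simp
  have "(\<Sum>i<n - 1. S (y (hd (ws[i := x (ws!i)])) # tl (ws[i := x (ws!i)]))) =
      S (y (x w1) # t) + (\<Sum>i<m. S (y w1 # t[i := x (t!i)]))"
    unfolding m ws by (simp only: sum.lessThan_Suc_shift) simp
  also have "\<dots> = S (y (x w1) # t) - S (x (y w1) # t)" using u2 by simp
  also have "\<dots> = - S (comm x y (hd ws) # tl ws)"
    using S_lin0[OF lt(2), of 1 "x (y w1)" "-1" "y (x w1)"] by (simp add: ws comm_def)
  finally show ?thesis .
qed

lemma omega_inv:
  assumes x: "x \<in> G" and y: "y \<in> G" and z: "z \<in> G"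
  shows "omega n br S (comm x y) z = - omega n br S y (comm x z)"
proof -
  from z obtain K c uz where rz: "isrep n br z K c uz" by (auto simp: LieD_iff)
  have fK: "finite K" and lz: "\<And>k. k \<in> K \<Longrightarrow> length (uz k) = n - 1" using rz by (auto simp: isrep_def)
  have "omega n br S y (comm x z) = (\<Sum>k\<in>K. c k * omega n br S y (comm x (Dop br (uz k))))"
    unfolding CE[OF x rz] by (rule B2[OF omega_bilinear fK _ y]) (auto intro: G_commD[OF x] lz)
  also have "\<dots> = (\<Sum>k\<in>K. c k * (\<Sum>i<n - 1. omega n br S y (Dop br ((uz k)[i := x ((uz k)!i)]))))"
  proof (intro sum.cong refl)
    fix k assume k: "k \<in> K"
    have "omega n br S y (comm x (Dop br (uz k))) =
      omega n br S y (\<lambda>v. \<Sum>i<n - 1. 1 *\<^sub>R Dop br ((uz k)[i := x ((uz k)!i)]) v)"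
      by (simp add: CD[OF x lz[OF k]])
    also have "\<dots> = (\<Sum>i<n - 1. 1 * omega n br S y (Dop br ((uz k)[i := x ((uz k)!i)])))"
      by (rule B2[OF omega_bilinear]) (use lz[OF k] y in \<open>auto intro!: G_D\<close>)
    finally show "c k * omega n br S y (comm x (Dop br (uz k))) =
       c k * (\<Sum>i<n - 1. omega n br S y (Dop br ((uz k)[i := x ((uz k)!i)])))" by simp
  qed
  also have "\<dots> = (\<Sum>k\<in>K. c k * - S (comm x y (hd (uz k)) # tl (uz k)))"
  proof (intro sum.cong refl)
    fix k assume k: "k \<in> K"
    have l: "\<And>i. length ((uz k)[i := x ((uz k)!i)]) = n - 1" using lz[OF k] by simp
    show "c k * (\<Sum>i<n - 1. omega n br S y (Dop br ((uz k)[i := x ((uz k)!i)]))) =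
       c k * - S (comm x y (hd (uz k)) # tl (uz k))"
      unfolding omega_D[OF y l] PK[OF x y lz[OF k], symmetric] ..
  qed
  also have "\<dots> = - omega n br S (comm x y) z"
    by (simp add: omega_rep[OF G_comm[OF x y] rz] FF_def sum_negf)
  finally show ?thesis by simp
qed

lemma omega_unique:
  assumes bl: "bilinear_on G \<omega>'"
    and h: "\<forall>us vs. length us = n - 1 \<and> length vs = n - 1 \<longrightarrow>
           \<omega>' (Dop br us) (Dop br vs) = S (Dop br us (hd vs) # tl vs)"
    and x: "x \<in> G" and y: "y \<in> G"
  shows "\<omega>' x y = omega n br S x y"
proof -
  from x obtain J d ux where rx: "isrep n br x J d ux" by (auto simp: LieD_iff)
  from y obtain K c uy where ry: "isrep n br y K c uy" by (auto simp: LieD_iff)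
  have lx: "\<And>j. j \<in> J \<Longrightarrow> length (ux j) = n - 1" and ly: "\<And>k. k \<in> K \<Longrightarrow> length (uy k) = n - 1"
    using rx ry by (auto simp: isrep_def)
  show ?thesis
    unfolding bil_expand[OF bl rx ry] bil_expand[OF omega_bilinear rx ry]
  proof -
    have eq: "\<And>j k. j \<in> J \<Longrightarrow> k \<in> K \<Longrightarrow>
       \<omega>' (Dop br (ux j)) (Dop br (uy k)) = omega n br S (Dop br (ux j)) (Dop br (uy k))"
      using h lx ly omega_D G_D by metis
    show "(\<Sum>j\<in>J. d j * (\<Sum>k\<in>K. c k * \<omega>' (Dop br (ux j)) (Dop br (uy k)))) =
      (\<Sum>j\<in>J. d j * (\<Sum>k\<in>K. c k * omega n br S (Dop br (ux j)) (Dop br (uy k))))"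
      by (intro sum.cong refl arg_cong[where f="(*) (d _)"]) (simp add: eq)
  qed
qed

lemma Jacobi: assumes x: "x \<in> G" and y: "y \<in> G" and z: "z \<in> G"
  shows "(\<lambda>w. comm x (comm y z) w + comm y (comm z x) w + comm z (comm x y) w) = (\<lambda>w. 0)"
proof
  fix w
  have lx: "linear x" and ly: "linear y" and lz: "linear z" using x y z by (auto intro: G_linear)
  show "comm x (comm y z) w + comm y (comm z x) w + comm z (comm x y) w = 0"
    by (simp add: comm_def linear_diff[OF lx] linear_diff[OF ly] linear_diff[OF lz])
qed

lemma main:
  "\<exists>\<omega>. bilinear_on (LieD n br) \<omega> \<and>
     (\<forall>us vs. length us = n - 1 \<and> length vs = n - 1 \<longrightarrow>
        \<omega> (Dop br us) (Dop br vs) = S (Dop br us (hd vs) # tl vs)) \<and>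
     (\<forall>\<omega>'. bilinear_on (LieD n br) \<omega>' \<and>
        (\<forall>us vs. length us = n - 1 \<and> length vs = n - 1 \<longrightarrow>
           \<omega>' (Dop br us) (Dop br vs) = S (Dop br us (hd vs) # tl vs))
        \<longrightarrow> (\<forall>x\<in>LieD n br. \<forall>y\<in>LieD n br. \<omega>' x y = \<omega> x y)) \<and>
     (\<forall>x\<in>LieD n br. \<forall>y\<in>LieD n br. \<omega> x y = \<omega> y x) \<and>
     (\<forall>x\<in>LieD n br. (\<forall>y\<in>LieD n br. \<omega> x y = 0) \<longrightarrow> x = (\<lambda>w. 0)) \<and>
     (\<forall>x\<in>LieD n br. \<forall>y\<in>LieD n br. \<forall>z\<in>LieD n br. \<omega> (comm x y) z = - \<omega> y (comm x z)) \<and>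
     metric_lie_algebra_on (LieD n br) \<omega>"
proof (intro exI[of _ "omega n br S"] conjI)
  show "bilinear_on G (omega n br S)" by (rule omega_bilinear)
  show "\<forall>us vs. length us = n - 1 \<and> length vs = n - 1 \<longrightarrow>
        omega n br S (Dop br us) (Dop br vs) = S (Dop br us (hd vs) # tl vs)"
    by (auto simp: omega_D G_D)
  show "\<forall>\<omega>'. bilinear_on G \<omega>' \<and>
        (\<forall>us vs. length us = n - 1 \<and> length vs = n - 1 \<longrightarrow>
           \<omega>' (Dop br us) (Dop br vs) = S (Dop br us (hd vs) # tl vs))
        \<longrightarrow> (\<forall>x\<in>G. \<forall>y\<in>G. \<omega>' x y = omega n br S x y)"
    using omega_unique by blast
  show sy: "\<forall>x\<in>G. \<forall>y\<in>G. omega n br S x y = omega n br S y x" using omega_sym by blast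
  show nd: "\<forall>x\<in>G. (\<forall>y\<in>G. omega n br S x y = 0) \<longrightarrow> x = (\<lambda>w. 0)" using omega_nondeg by blast
  show iv: "\<forall>x\<in>G. \<forall>y\<in>G. \<forall>z\<in>G. omega n br S (comm x y) z = - omega n br S y (comm x z)"
    using omega_inv by blast
  show "metric_lie_algebra_on G (omega n br S)"
    unfolding metric_lie_algebra_on_def
  proof (intro conjI)
    show "\<forall>x\<in>G. \<forall>y\<in>G. comm x y = lincomb (- 1) (comm y x) 0 (\<lambda>w. 0)"
      by (simp add: comm_def lincomb_def fun_eq_iff)
  qed (use G_zero G_lincomb G_comm Jacobi omega_bilinear sy nd iv in blast)+
qed

end

theorem mainTheorem3:
  fixes n :: nat
    and br :: "'v::euclidean_space list \<Rightarrow> 'v"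
    and S :: "'v list \<Rightarrow> real"
  assumes "n \<ge> 2"
    and "gen_metric_n_leibniz n br S"
  shows "\<exists>\<omega>. bilinear_on (LieD n br) \<omega> \<and>
     (\<forall>us vs. length us = n - 1 \<and> length vs = n - 1 \<longrightarrow>
        \<omega> (Dop br us) (Dop br vs) = S (Dop br us (hd vs) # tl vs)) \<and>
     (\<forall>\<omega>'. bilinear_on (LieD n br) \<omega>' \<and>
        (\<forall>us vs. length us = n - 1 \<and> length vs = n - 1 \<longrightarrow>
           \<omega>' (Dop br us) (Dop br vs) = S (Dop br us (hd vs) # tl vs))
        \<longrightarrow> (\<forall>x\<in>LieD n br. \<forall>y\<in>LieD n br. \<omega>' x y = \<omega> x y)) \<and>
     (\<forall>x\<in>LieD n br. \<forall>y\<in>LieD n br. \<omega> x y = \<omega> y x) \<and>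
     (\<forall>x\<in>LieD n br. (\<forall>y\<in>LieD n br. \<omega> x y = 0) \<longrightarrow> x = (\<lambda>w. 0)) \<and>
     (\<forall>x\<in>LieD n br. \<forall>y\<in>LieD n br. \<forall>z\<in>LieD n br. \<omega> (comm x y) z = - \<omega> y (comm x z)) \<and>
     metric_lie_algebra_on (LieD n br) \<omega>"
  using gm.main[of n br S] assms unfolding gm_def by blast

end
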